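(* Let $E$ be a finite-dimensional real Euclidean space with translation space $V$, and let $\Phi_{\mathrm{aff}}$ be an affine root system on $E$ with a chosen chamber $C$ and corresponding basis $B$. Let $J\subset B$ be such that $DJ=\{Da\mid a\in J\}$ is linearly independent. Then there exists a basis $B_J$ of the affine root system $(\Phi_{\mathrm{aff}})_J$ on $E_J$ with $J\subset B_J$.
   Context: Affine root systems are in the sense of Macdonald: a set of affine-linear functions on $E$. For an affine root $a$, $Da\in V^*$ is its gradient: $a(x+v)=a(x)+(Da)(v)$. Set $V^J=\{v\in V\mid \alpha(v)=0\ \forall\alpha\in DJ\}$, $E_J=E/V^J$, an affine space with translation space $V/V^J$, given the inner product transported from the orthogonal complement $(V^J)^\perp$ via the isomorphism $(V^J)^\perp\to V/V^J$. Let $(\Phi_{\mathrm{aff}})_J=\{a\in\Phi_{\mathrm{aff}}\mid Da\in\mathbb R\cdot DJ\}$; its elements are constant along $V^J$ and hence are affine functions on $E_J$, and $(\Phi_{\mathrm{aff}})_J$ is an affine root system on $E_J$. *)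

theory Defs
  imports "HOL-Analysis.Analysis"
begin

text \<open>The Euclidean affine space E is modelled by a linear subspace W of a
Euclidean space 'a (an origin being chosen); its translation space is W itself.
An affine function on W is represented by a pair (g, c) with g in W, standing for
x \<mapsto> g \<bullet> x + c; the gradient Da is (the Riesz vector of) g = fst a.\<close>

definition aeval :: "'a::euclidean_space \<times> real \<Rightarrow> 'a \<Rightarrow> real" where
  "aeval a x = fst a \<bullet> x + snd a"

definition grad :: "'a::euclidean_space \<times> real \<Rightarrow> 'a" where
  "grad a = fst a"

definition ahyp :: "'a::euclidean_space set \<Rightarrow> 'a \<times> real \<Rightarrow> 'a set" where
  "ahyp W a = {x \<in> W. aeval a x = 0}"

definition arefl :: "'a::euclidean_space \<times> real \<Rightarrow> 'a \<Rightarrow> 'a" where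
  "arefl a x = x - (2 * aeval a x / (grad a \<bullet> grad a)) *\<^sub>R grad a"

text \<open>Cartan integer n(a,b) = 2<Da,Db>/<Db,Db>; note b \<circ> s_a = b - n(b,a) a.\<close>
definition cartan :: "'a::euclidean_space \<times> real \<Rightarrow> 'a \<times> real \<Rightarrow> real" where
  "cartan a b = 2 * (grad a \<bullet> grad b) / (grad b \<bullet> grad b)"

inductive_set weyl_group :: "('a::euclidean_space \<times> real) set \<Rightarrow> ('a \<Rightarrow> 'a) set"
  for S where
  weyl_id: "id \<in> weyl_group S"
| weyl_step: "w \<in> weyl_group S \<Longrightarrow> a \<in> S \<Longrightarrow> arefl a \<circ> w \<in> weyl_group S"

text \<open>Affine root system on W in the sense of Macdonald (AR1)-(AR4).\<close>
definition affine_root_system :: "'a::euclidean_space set \<Rightarrow> ('a \<times> real) set \<Rightarrow> bool" where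
  "affine_root_system W S \<longleftrightarrow>
     subspace W \<and>
     (\<forall>a\<in>S. grad a \<in> W \<and> grad a \<noteq> 0) \<and>
     span S = W \<times> (UNIV :: real set) \<and>
     (\<forall>a\<in>S. \<forall>b\<in>S. b - cartan b a *\<^sub>R a \<in> S) \<and>
     (\<forall>a\<in>S. \<forall>b\<in>S. cartan a b \<in> \<int>) \<and>
     (\<forall>K. compact K \<and> K \<subseteq> W \<longrightarrow> finite {w \<in> weyl_group S. w ` K \<inter> K \<noteq> {}})"

definition hyp_complement :: "'a::euclidean_space set \<Rightarrow> ('a \<times> real) set \<Rightarrow> 'a set" where
  "hyp_complement W S = W - (\<Union>a\<in>S. ahyp W a)"

definition chamber :: "'a::euclidean_space set \<Rightarrow> ('a \<times> real) set \<Rightarrow> 'a set \<Rightarrow> bool" where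
  "chamber W S C \<longleftrightarrow>
     (\<exists>x\<in>hyp_complement W S. C = connected_component_set (hyp_complement W S) x)"

definition is_wall :: "'a::euclidean_space set \<Rightarrow> 'a set \<Rightarrow> bool" where
  "is_wall H C \<longleftrightarrow> H \<inter> C = {} \<and> (\<exists>x\<in>H. \<exists>e>0. ball x e \<inter> H \<subseteq> closure C)"

definition chamber_basis :: "'a::euclidean_space set \<Rightarrow> ('a \<times> real) set \<Rightarrow> 'a set \<Rightarrow> ('a \<times> real) set" where
  "chamber_basis W S C =
     {a \<in> S. (1/2) *\<^sub>R a \<notin> S \<and> (\<forall>x\<in>C. aeval a x > 0) \<and> is_wall (ahyp W a) C}"

definition is_basis_ars :: "'a::euclidean_space set \<Rightarrow> ('a \<times> real) set \<Rightarrow> ('a \<times> real) set \<Rightarrow> bool" where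
  "is_basis_ars W S B \<longleftrightarrow> (\<exists>C. chamber W S C \<and> B = chamber_basis W S C)"

text \<open>E_J = E / V^J is identified isometrically with (V^J)^\<perp> = span DJ, and
(\<Phi>_aff)_J = {a \<in> \<Phi>_aff. Da \<in> span DJ}, restricted to it.\<close>
definition EJ :: "('a::euclidean_space \<times> real) set \<Rightarrow> 'a set" where
  "EJ J = span (grad ` J)"

definition PhiJ :: "('a::euclidean_space \<times> real) set \<Rightarrow> ('a \<times> real) set \<Rightarrow> ('a \<times> real) set" where
  "PhiJ S J = {a \<in> S. grad a \<in> span (grad ` J)}"

end

theory Submission
  imports Defs
begin

lemma proj_exists:
  fixes U :: "'a::euclidean_space set"
  shows "\<exists>y. y \<in> span U \<and> (\<forall>w\<in>span U. orthogonal (x - y) w)"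
proof -
  obtain y z where "y \<in> span U" "\<And>w. w \<in> span U \<Longrightarrow> orthogonal z w" "x = y + z"
    using orthogonal_subspace_decomp_exists by blast
  then show ?thesis by (metis add_diff_cancel_left')
qed

lemma proj_unique:
  fixes U :: "'a::euclidean_space set"
  assumes "y \<in> span U" "\<forall>w\<in>span U. orthogonal (x - y) w"
      and "y' \<in> span U" "\<forall>w\<in>span U. orthogonal (x - y') w"
  shows "y = y'"
proof -
  have d: "y' - y \<in> span U" using assms span_diff by blast
  have "orthogonal (x - y) (y' - y)" "orthogonal (x - y') (y' - y)"
    using assms d by auto
  then have "orthogonal ((x - y) - (x - y')) (y' - y)"
    by (simp add: orthogonal_def inner_diff_left)
  then have "orthogonal (y' - y) (y' - y)" by simp
  then show ?thesis by (simp add: orthogonal_self)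
qed

definition projU :: "'a::euclidean_space set \<Rightarrow> 'a \<Rightarrow> 'a" where
  "projU U x = (SOME y. y \<in> span U \<and> (\<forall>w\<in>span U. orthogonal (x - y) w))"

lemma projU_prop:
  "projU U x \<in> span U \<and> (\<forall>w\<in>span U. orthogonal (x - projU U x) w)"
  unfolding projU_def by (rule someI_ex[OF proj_exists])

lemma projU_eq:
  assumes "y \<in> span U" "\<forall>w\<in>span U. orthogonal (x - y) w"
  shows "projU U x = y"
  using proj_unique[OF projU_prop[THEN conjunct1] projU_prop[THEN conjunct2] assms] .

lemma projU_linear: "linear (projU U)"
proof (rule linearI)
  fix x y
  show "projU U (x + y) = projU U x + projU U y"
  proof (rule projU_eq)
    show "projU U x + projU U y \<in> span U" using projU_prop span_add by blast
    show "\<forall>w\<in>span U. orthogonal (x + y - (projU U x + projU U y)) w"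
    proof
      fix w assume "w \<in> span U"
      then have "orthogonal (x - projU U x) w" "orthogonal (y - projU U y) w"
        using projU_prop by blast+
      then show "orthogonal (x + y - (projU U x + projU U y)) w"
        by (simp add: orthogonal_def inner_diff_left inner_add_left)
    qed
  qed
next
  fix c :: real and x
  show "projU U (c *\<^sub>R x) = c *\<^sub>R projU U x"
  proof (rule projU_eq)
    show "c *\<^sub>R projU U x \<in> span U" using projU_prop span_mul by blast
    show "\<forall>w\<in>span U. orthogonal (c *\<^sub>R x - c *\<^sub>R projU U x) w"
    proof
      fix w assume "w \<in> span U"
      then have "orthogonal (x - projU U x) w"
        using projU_prop by blast
      then show "orthogonal (c *\<^sub>R x - c *\<^sub>R projU U x) w"
        by (simp add: orthogonal_def inner_diff_left)
    qed
  qed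
qed

lemma aeval_projU:
  assumes "grad a \<in> span U"
  shows "aeval a (projU U x) = aeval a x"
proof -
  have "orthogonal (x - projU U x) (fst a)" using projU_prop[of U x] assms by (simp add: grad_def)
  then have "fst a \<bullet> x = fst a \<bullet> projU U x"
    by (simp add: orthogonal_def inner_diff_right inner_commute)
  then show ?thesis by (simp add: aeval_def)
qed

theorem lemmaA1:
  fixes S :: "('a::euclidean_space \<times> real) set"
    and C :: "'a set"
    and J :: "('a \<times> real) set"
  assumes "affine_root_system UNIV S"
    and "chamber UNIV S C"
    and "J \<subseteq> chamber_basis UNIV S C"
    and "independent (grad ` J)"
  shows "\<exists>BJ. is_basis_ars (EJ J) (PhiJ S J) BJ \<and> J \<subseteq> BJ"
proof -
  define U where "U = grad ` J"
  define P where "P = projU U"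
  define hc where "hc = hyp_complement (EJ J) (PhiJ S J)"
  obtain x1 where x1: "x1 \<in> hyp_complement UNIV S"
    and Ceq: "C = connected_component_set (hyp_complement UNIV S) x1"
    using assms(2) unfolding chamber_def by blast
  have x1C: "x1 \<in> C" using Ceq x1 by simp
  have EJU: "EJ J = span U" by (simp add: EJ_def U_def)
  have Phisub: "PhiJ S J \<subseteq> S" by (auto simp: PhiJ_def)
  have aevP: "aeval a (P x) = aeval a x" if "a \<in> PhiJ S J" for a x
    using that aeval_projU[of a U x] by (simp add: PhiJ_def P_def U_def)
  have Pin: "P x \<in> span U" for x using projU_prop P_def by blast
  have PC: "P ` C \<subseteq> hc"
  proof
    fix y assume "y \<in> P ` C"
    then obtain x where x: "x \<in> C" "y = P x" by blast
    have "x \<in> hyp_complement UNIV S" using x Ceq connected_component_subset by blast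
    then have "\<forall>a\<in>S. aeval a x \<noteq> 0" by (auto simp: hyp_complement_def ahyp_def)
    then show "y \<in> hc" using x Phisub aevP Pin EJU
      by (auto simp: hc_def hyp_complement_def ahyp_def)
  qed
  define C' where "C' = connected_component_set hc (P x1)"
  have Px1: "P x1 \<in> hc" using PC x1C by blast
  have linP: "linear P" using projU_linear P_def by simp
  have contP: "continuous_on A P" for A using linP linear_continuous_on linear_linear by blast
  have conC: "connected C" using Ceq by simp
  have PCC': "P ` C \<subseteq> C'" unfolding C'_def
    by (rule connected_component_maximal) (use x1C PC connected_continuous_image[OF contP conC] in auto)
  have C'hc: "C' \<subseteq> hc" unfolding C'_def by (rule connected_component_subset)
  have conC': "connected C'" unfolding C'_def by simp
  have closP: "P ` closure C \<subseteq> closure C'"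
    by (rule image_closure_subset[OF contP]) (use PCC' closure_subset in auto)
  have chC': "chamber (EJ J) (PhiJ S J) C'"
    unfolding chamber_def using Px1 C'_def hc_def by blast
  have "J \<subseteq> chamber_basis (EJ J) (PhiJ S J) C'"
  proof
    fix a assume aJ: "a \<in> J"
    then have aB: "a \<in> chamber_basis UNIV S C" using assms(3) by blast
    have aS: "a \<in> S" and half: "(1/2) *\<^sub>R a \<notin> S" and pos: "\<forall>x\<in>C. aeval a x > 0"
      and wall: "is_wall (ahyp UNIV a) C"
      using aB by (auto simp: chamber_basis_def)
    have aPhi: "a \<in> PhiJ S J" using aS aJ by (simp add: PhiJ_def span_base)
    have nz: "aeval a y \<noteq> 0" if "y \<in> C'" for y
      using that C'hc aPhi by (auto simp: hc_def hyp_complement_def ahyp_def)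
    have posC': "\<forall>x\<in>C'. aeval a x > 0"
    proof (rule ccontr)
      assume "\<not> (\<forall>x\<in>C'. aeval a x > 0)"
      then obtain y where y: "y \<in> C'" "aeval a y \<le> 0" by force
      have p: "aeval a (P x1) > 0" using aevP[OF aPhi] pos x1C by simp
      have "P x1 \<in> C'" using PCC' x1C by blast
      then obtain z where "z \<in> C'" "inner (fst a) z = - snd a"
        using connected_ivt_hyperplane[OF conC' y(1) \<open>P x1 \<in> C'\<close>, of "fst a" "- snd a"] y p
        by (auto simp: aeval_def)
      then show False using nz[of z] by (simp add: aeval_def)
    qed
    have wallJ: "is_wall (ahyp (EJ J) a) C'"
    proof -
      obtain x e where x: "x \<in> ahyp UNIV a" and e: "e > 0"
        and sub: "ball x e \<inter> ahyp UNIV a \<subseteq> closure C"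
        using wall unfolding is_wall_def by blast
      have "P x \<in> ahyp (EJ J) a" using x aevP[OF aPhi] Pin EJU by (auto simp: ahyp_def)
      moreover have "ball (P x) e \<inter> ahyp (EJ J) a \<subseteq> closure C'"
      proof
        fix y assume y: "y \<in> ball (P x) e \<inter> ahyp (EJ J) a"
        define z where "z = y + (x - P x)"
        have yU: "y \<in> span U" using y EJU by (simp add: ahyp_def)
        have orth: "\<forall>w\<in>span U. orthogonal (x - projU U x) w" using projU_prop by blast
        have Pz: "P z = y" unfolding P_def
          by (rule projU_eq) (use yU orth in \<open>simp_all add: z_def P_def\<close>)
        have "aeval a z = aeval a (P z)" using aevP[OF aPhi] by simp
        then have "aeval a z = 0" using Pz y by (simp add: ahyp_def)
        moreover have "dist x z < e" using y
          by (simp add: z_def dist_norm)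
        ultimately have "z \<in> closure C" using sub by (auto simp: ahyp_def)
        then show "y \<in> closure C'" using closP Pz by blast
      qed
      moreover have "ahyp (EJ J) a \<inter> C' = {}" using nz by (auto simp: ahyp_def)
      ultimately show ?thesis unfolding is_wall_def using e by blast
    qed
    show "a \<in> chamber_basis (EJ J) (PhiJ S J) C'"
      using aPhi half Phisub posC' wallJ by (auto simp: chamber_basis_def)
  qed
  then show ?thesis using chC' unfolding is_basis_ars_def by blast
qed

end
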